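(* Let $1<p<\infty$ with $p\neq2$. For each $r\ge1$ let $T_r$ be the diagonal operator on $l^2([1,r])$ with diagonal entries $\frac1r,\frac2r,\ldots,\frac rr$. Let $\mathcal{Y}=\big(\bigoplus_{r\ge1}l^2([1,r])\big)_{l^p}$ and $T=\bigoplus_{r\ge1}T_r\in B(\mathcal{Y})$. Let $D$ be a (bounded) diagonal operator on $l^p$. Then there is no operator $L:\mathcal{Y}\to l^p$ such that $\inf\{\|Lx\|:\|x\|=1\}>0$ and $DL-LT$ is compact.
   Context: $l^2([1,r])$ is the $r$-dimensional Hilbert space $\ell^2(\{1,\ldots,r\})$; $(\bigoplus\cdot)_{l^p}$ denotes the $l^p$-direct sum. A diagonal operator on $l^p$ is $(x_1,x_2,\ldots)\mapsto(w_1x_1,w_2x_2,\ldots)$ with bounded scalars $w_i$. *)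

theory Defs
  imports "HOL-Analysis.Analysis"
begin

definition lp_space :: "real \<Rightarrow> (nat \<Rightarrow> complex) set" where
  "lp_space p = {x. summable (\<lambda>n. norm (x n) powr p)}"

definition lp_norm :: "real \<Rightarrow> (nat \<Rightarrow> complex) \<Rightarrow> real" where
  "lp_norm p x = (\<Sum>n. norm (x n) powr p) powr (1 / p)"

definition lp_dist :: "real \<Rightarrow> (nat \<Rightarrow> complex) \<Rightarrow> (nat \<Rightarrow> complex) \<Rightarrow> real" where
  "lp_dist p x y = lp_norm p (\<lambda>n. x n - y n)"

text \<open>Index set of the direct sum: the r-th summand l^2([1,r]) has coordinates (r,i), 1 <= i <= r.\<close>
definition Y_index :: "(nat \<times> nat) set" where
  "Y_index = {(r, i). 1 \<le> i \<and> i \<le> r}"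

definition Y_blocknorm :: "(nat \<times> nat \<Rightarrow> complex) \<Rightarrow> nat \<Rightarrow> real" where
  "Y_blocknorm x r = sqrt (\<Sum>i = 1..r. (norm (x (r, i)))\<^sup>2)"

definition Y_space :: "real \<Rightarrow> (nat \<times> nat \<Rightarrow> complex) set" where
  "Y_space p = {x. (\<forall>k. k \<notin> Y_index \<longrightarrow> x k = 0) \<and>
                   summable (\<lambda>r. Y_blocknorm x r powr p)}"

definition Y_norm :: "real \<Rightarrow> (nat \<times> nat \<Rightarrow> complex) \<Rightarrow> real" where
  "Y_norm p x = (\<Sum>r. Y_blocknorm x r powr p) powr (1 / p)"

definition T_op :: "(nat \<times> nat \<Rightarrow> complex) \<Rightarrow> (nat \<times> nat \<Rightarrow> complex)" where
  "T_op x = (\<lambda>(r, i). complex_of_real (real i / real r) * x (r, i))"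

definition diag_op :: "(nat \<Rightarrow> complex) \<Rightarrow> (nat \<Rightarrow> complex) \<Rightarrow> (nat \<Rightarrow> complex)" where
  "diag_op w x = (\<lambda>n. w n * x n)"

definition bounded_linear_Y_lp ::
  "real \<Rightarrow> ((nat \<times> nat \<Rightarrow> complex) \<Rightarrow> (nat \<Rightarrow> complex)) \<Rightarrow> bool" where
  "bounded_linear_Y_lp p L \<longleftrightarrow>
     (\<forall>x \<in> Y_space p. L x \<in> lp_space p) \<and>
     (\<forall>x \<in> Y_space p. \<forall>y \<in> Y_space p. L (\<lambda>k. x k + y k) = (\<lambda>n. L x n + L y n)) \<and>
     (\<forall>x \<in> Y_space p. \<forall>c. L (\<lambda>k. c * x k) = (\<lambda>n. c * L x n)) \<and>
     (\<exists>C. \<forall>x \<in> Y_space p. lp_norm p (L x) \<le> C * Y_norm p x)"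

definition compact_Y_lp ::
  "real \<Rightarrow> ((nat \<times> nat \<Rightarrow> complex) \<Rightarrow> (nat \<Rightarrow> complex)) \<Rightarrow> bool" where
  "compact_Y_lp p K \<longleftrightarrow>
     compactin (Metric_space.mtopology (lp_space p) (lp_dist p))
       ((Metric_space.mtopology (lp_space p) (lp_dist p)) closure_of
          (K ` {x \<in> Y_space p. Y_norm p x \<le> 1}))"

end

theory Submission
  imports Defs
begin

lemma powr_convex0:
  fixes x y t p :: real
  assumes "p \<ge> 1" "x \<ge> 0" "y \<ge> 0" "0 \<le> t" "t \<le> 1"
  shows "((1-t)*x + t*y) powr p \<le> (1-t) * x powr p + t * y powr p"
proof -
  have tp: "s powr p \<le> s" if "0 \<le> s" "s \<le> 1" for s :: real
  proof (cases "s = 0")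
    case True then show ?thesis by simp
  next
    case False
    then have "s powr p \<le> s powr 1" using that assms(1)
      by (intro powr_mono') auto
    then show ?thesis using that by simp
  qed
  show ?thesis
  proof (cases "x = 0")
    case True
    have "(t*y) powr p = t powr p * y powr p" using assms by (simp add: powr_mult)
    also have "\<dots> \<le> t * y powr p" using tp[of t] assms by (intro mult_right_mono) auto
    finally show ?thesis using True assms by simp
  next
    case x: False
    show ?thesis
    proof (cases "y = 0")
      case True
      have "((1-t)*x) powr p = (1-t) powr p * x powr p" using assms by (simp add: powr_mult)
      also have "\<dots> \<le> (1-t) * x powr p" using tp[of "1-t"] assms by (intro mult_right_mono) auto
      finally show ?thesis using True assms by simp
    next
      case False
      then show ?thesis using convex_onD[OF powr_convex[OF assms(1)], of t x y] assms x by auto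
    qed
  qed
qed

lemma lp_norm_nonneg: "lp_norm p f \<ge> 0"
  unfolding lp_norm_def by simp

lemma lp_sum_nonneg: "(\<Sum>n. norm (f n) powr p) \<ge> 0" if "f \<in> lp_space p"
  using that unfolding lp_space_def by (auto intro: suminf_nonneg)

lemma lp_norm_powr:
  assumes "p > 0" "f \<in> lp_space p"
  shows "lp_norm p f powr p = (\<Sum>n. norm (f n) powr p)"
  using assms lp_sum_nonneg[OF assms(2)] unfolding lp_norm_def
  by (simp add: powr_powr)

lemma powr_inv_cancel:
  fixes x p :: real assumes "x \<ge> 0" "p > 0"
  shows "(x powr p) powr (1/p) = x" "(x powr (1/p)) powr p = x"
proof -
  show "(x powr p) powr (1/p) = x"
    using assms by (cases "x = 0") (auto simp: powr_powr)
  show "(x powr (1/p)) powr p = x"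
    using assms by (cases "x = 0") (auto simp: powr_powr)
qed

lemma lp_norm_eq:
  assumes "p > 0" "s \<ge> 0" "lp_norm p f powr p = s"
  shows "lp_norm p f = s powr (1/p)"
proof -
  have "lp_norm p f = (lp_norm p f powr p) powr (1/p)"
    using powr_inv_cancel(1)[OF lp_norm_nonneg assms(1)] by metis
  also have "\<dots> = s powr (1/p)" using assms(3) by simp
  finally show ?thesis .
qed

lemma lp_mono:
  assumes "p > 0" "g \<in> lp_space p" "\<And>n. norm (f n) \<le> norm (g n)"
  shows "f \<in> lp_space p" "lp_norm p f \<le> lp_norm p g"
proof -
  have s: "summable (\<lambda>n. norm (g n) powr p)" using assms unfolding lp_space_def by auto
  have le: "norm (f n) powr p \<le> norm (g n) powr p" for n
    using assms by (intro powr_mono2) auto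
  have sf: "summable (\<lambda>n. norm (f n) powr p)"
    by (rule summable_comparison_test'[OF s]) (use le in auto)
  then show "f \<in> lp_space p" unfolding lp_space_def by auto
  have "(\<Sum>n. norm (f n) powr p) \<le> (\<Sum>n. norm (g n) powr p)"
    by (intro suminf_le sf s le)
  then show "lp_norm p f \<le> lp_norm p g" unfolding lp_norm_def using assms
    by (intro powr_mono2) (auto intro!: suminf_nonneg sf)
qed

lemma lp_scale:
  assumes "p > 0" "f \<in> lp_space p"
  shows "(\<lambda>n. c * f n) \<in> lp_space p" "lp_norm p (\<lambda>n. c * f n) = norm c * lp_norm p f"
proof -
  have s: "summable (\<lambda>n. norm (f n) powr p)" using assms unfolding lp_space_def by auto
  have eq: "norm (c * f n) powr p = norm c powr p * norm (f n) powr p" for n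
    by (simp add: norm_mult powr_mult)
  have "summable (\<lambda>n. norm c powr p * norm (f n) powr p)" by (rule summable_mult[OF s])
  then show "(\<lambda>n. c * f n) \<in> lp_space p" by (simp only: lp_space_def mem_Collect_eq eq)
  have "(\<Sum>n. norm (c * f n) powr p) = norm c powr p * (\<Sum>n. norm (f n) powr p)"
    unfolding eq using suminf_mult[OF s] by simp
  then show "lp_norm p (\<lambda>n. c * f n) = norm c * lp_norm p f" unfolding lp_norm_def
    using assms lp_sum_nonneg[OF assms(2)] by (simp add: powr_mult powr_powr)
qed

lemma lp_coord:
  assumes "p > 0" "f \<in> lp_space p"
  shows "norm (f n) \<le> lp_norm p f"
proof -
  have s: "summable (\<lambda>n. norm (f n) powr p)" using assms unfolding lp_space_def by auto
  have "norm (f n) powr p \<le> (\<Sum>n. norm (f n) powr p)"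
    using sum_le_suminf[OF s, of "{n}"] by auto
  hence "(norm (f n) powr p) powr (1/p) \<le> (\<Sum>n. norm (f n) powr p) powr (1/p)"
    using assms by (intro powr_mono2) auto
  then show ?thesis using assms unfolding lp_norm_def by (simp add: powr_powr)
qed

lemma lp_zero_norm:
  assumes "p > 0" "f \<in> lp_space p" "lp_norm p f = 0"
  shows "f = (\<lambda>n. 0)"
  using lp_coord[OF assms(1,2)] assms(3) by (intro ext) (metis norm_le_zero_iff)

lemma lp_zero: "p > 0 \<Longrightarrow> (\<lambda>n. 0) \<in> lp_space p \<and> lp_norm p (\<lambda>n. 0) = 0"
  by (simp add: lp_space_def lp_norm_def)

lemma minkowski:
  assumes p: "p \<ge> 1" and f: "f \<in> lp_space p" and g: "g \<in> lp_space p"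
  shows "(\<lambda>n. f n + g n) \<in> lp_space p \<and> lp_norm p (\<lambda>n. f n + g n) \<le> lp_norm p f + lp_norm p g"
proof -
  define A where "A = lp_norm p f"
  define B where "B = lp_norm p g"
  have p0: "p > 0" using p by simp
  have A0: "A \<ge> 0" "B \<ge> 0" unfolding A_def B_def by (auto simp: lp_norm_nonneg)
  show ?thesis
  proof (cases "A = 0 \<or> B = 0")
    case True
    then show ?thesis
    proof
      assume "A = 0"
      then have "f = (\<lambda>n. 0)" using lp_zero_norm[OF p0 f] A_def by simp
      then show ?thesis using g A_def B_def \<open>A = 0\<close> by simp
    next
      assume "B = 0"
      then have "g = (\<lambda>n. 0)" using lp_zero_norm[OF p0 g] B_def by simp
      then show ?thesis using f A_def B_def \<open>B = 0\<close> by simp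
    qed
  next
    case False
    then have AB: "A > 0" "B > 0" using A0 by auto
    define t where "t = B / (A + B)"
    have t01: "0 \<le> t" "t \<le> 1" using AB unfolding t_def by auto
    have sf: "summable (\<lambda>n. norm (f n) powr p)" using f unfolding lp_space_def by auto
    have sg: "summable (\<lambda>n. norm (g n) powr p)" using g unfolding lp_space_def by auto
    have SA: "(\<Sum>n. norm (f n) powr p) = A powr p" using lp_norm_powr[OF p0 f] A_def by simp
    have SB: "(\<Sum>n. norm (g n) powr p) = B powr p" using lp_norm_powr[OF p0 g] B_def by simp
    define h where "h n = (A+B) powr p * ((1-t) * (norm (f n) powr p / A powr p) + t * (norm (g n) powr p / B powr p))" for n
    have pt: "norm (f n + g n) powr p \<le> h n" for n
    proof -
      have e1: "(1-t) * (norm (f n) / A) + t * (norm (g n) / B) = (norm (f n) + norm (g n)) / (A + B)"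
      proof -
        have "1 - t = A/(A+B)" using AB unfolding t_def by (simp add: field_simps)
        then show ?thesis unfolding t_def using AB by (simp add: divide_simps)
      qed
      have "norm (f n + g n) powr p \<le> (norm (f n) + norm (g n)) powr p"
        using p0 by (intro powr_mono2) (auto simp: norm_triangle_ineq)
      also have "\<dots> = ((A+B) * ((norm (f n) + norm (g n)) / (A + B))) powr p"
        using AB by simp
      also have "\<dots> = (A+B) powr p * ((norm (f n) + norm (g n)) / (A + B)) powr p"
        using AB by (subst powr_mult) auto
      also have "\<dots> = (A+B) powr p * ((1-t) * (norm (f n) / A) + t * (norm (g n) / B)) powr p"
        by (simp only: e1)
      also have "\<dots> \<le> (A+B) powr p * ((1-t) * (norm (f n) / A) powr p + t * (norm (g n) / B) powr p)"
        using AB t01 p by (intro mult_left_mono powr_convex0) auto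
      also have "\<dots> = h n" unfolding h_def using AB by (simp add: powr_divide)
      finally show ?thesis .
    qed
    have hsum: "h sums ((A+B) powr p * ((1-t) * ((\<Sum>n. norm (f n) powr p) / A powr p) + t * ((\<Sum>n. norm (g n) powr p) / B powr p)))"
      unfolding h_def by (intro sums_mult sums_add sums_divide summable_sums sf sg)
    have sh: "summable h" using hsum sums_summable by blast
    have "(\<Sum>n. h n) = (A+B) powr p * ((1-t) * ((\<Sum>n. norm (f n) powr p) / A powr p) + t * ((\<Sum>n. norm (g n) powr p) / B powr p))"
      using hsum sums_unique by metis
    also have "\<dots> = (A+B) powr p" using AB by (simp add: SA SB)
    finally have hs: "(\<Sum>n. h n) = (A+B) powr p" .
    have sfg: "summable (\<lambda>n. norm (f n + g n) powr p)"
      by (rule summable_comparison_test'[OF sh]) (use pt in auto)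
    have le: "(\<Sum>n. norm (f n + g n) powr p) \<le> (A+B) powr p"
      using suminf_le[OF pt sfg sh] hs by simp
    have "lp_norm p (\<lambda>n. f n + g n) \<le> ((A+B) powr p) powr (1/p)"
      unfolding lp_norm_def using p0 le by (intro powr_mono2) (auto intro!: suminf_nonneg sfg)
    also have "\<dots> = A + B" using AB p0 by (simp add: powr_inv_cancel)
    finally show ?thesis using sfg unfolding lp_space_def A_def B_def by auto
  qed
qed

lemma lp_neg:
  assumes "p > 0" "f \<in> lp_space p"
  shows "(\<lambda>n. - f n) \<in> lp_space p" "lp_norm p (\<lambda>n. - f n) = lp_norm p f"
  using lp_scale[OF assms, of "-1"] by auto

lemma lp_diff:
  assumes "p \<ge> 1" "f \<in> lp_space p" "g \<in> lp_space p"
  shows "(\<lambda>n. f n - g n) \<in> lp_space p \<and> lp_norm p (\<lambda>n. f n - g n) \<le> lp_norm p f + lp_norm p g"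
  using minkowski[OF assms(1,2) lp_neg(1)[OF _ assms(3)]] lp_neg(2)[OF _ assms(3)] assms(1) by auto

lemma lp_sum:
  assumes p: "p \<ge> 1" and "finite J" and "\<And>j. j \<in> J \<Longrightarrow> F j \<in> lp_space p"
  shows "(\<lambda>n. \<Sum>j\<in>J. F j n) \<in> lp_space p \<and> lp_norm p (\<lambda>n. \<Sum>j\<in>J. F j n) \<le> (\<Sum>j\<in>J. lp_norm p (F j))"
  using assms(2,3)
proof (induction J rule: finite_induct)
  case empty
  then show ?case using lp_zero[of p] p by simp
next
  case (insert x J)
  have m: "(\<lambda>n. F x n + (\<Sum>j\<in>J. F j n)) \<in> lp_space p \<and>
      lp_norm p (\<lambda>n. F x n + (\<Sum>j\<in>J. F j n)) \<le> lp_norm p (F x) + lp_norm p (\<lambda>n. \<Sum>j\<in>J. F j n)"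
    using minkowski[OF p, of "F x" "\<lambda>n. \<Sum>j\<in>J. F j n"] insert by auto
  then show ?case using insert by auto
qed

lemma pow_sum_disj:
  assumes "p > 0" "finite J" "\<And>j j'. j \<in> J \<Longrightarrow> j' \<in> J \<Longrightarrow> j \<noteq> j' \<Longrightarrow> F j n = 0 \<or> F j' n = 0"
  shows "norm (\<Sum>j\<in>J. F j n) powr p = (\<Sum>j\<in>J. norm (F j n) powr p)"
proof (cases "\<exists>j0\<in>J. F j0 n \<noteq> 0")
  case False
  then show ?thesis using assms by simp
next
  case True
  then obtain j0 where j0: "j0 \<in> J" "F j0 n \<noteq> 0" by blast
  have z: "F j n = 0" if "j \<in> J" "j \<noteq> j0" for j using assms(3)[OF that(1) j0(1) that(2)] j0 by auto
  have "(\<Sum>j\<in>J. F j n) = F j0 n"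
    using assms(2) j0(1) z by (subst sum.remove[of _ j0]) (auto intro!: sum.neutral)
  moreover have "(\<Sum>j\<in>J. norm (F j n) powr p) = norm (F j0 n) powr p"
    using assms(2) j0(1) z by (subst sum.remove[of _ j0]) (auto intro!: sum.neutral)
  ultimately show ?thesis by simp
qed

lemma lp_disj:
  assumes p: "p > 0" and "finite J" and F: "\<And>j. j \<in> J \<Longrightarrow> F j \<in> lp_space p"
    and d: "\<And>j j' n. j \<in> J \<Longrightarrow> j' \<in> J \<Longrightarrow> j \<noteq> j' \<Longrightarrow> F j n = 0 \<or> F j' n = 0"
  shows "(\<lambda>n. \<Sum>j\<in>J. F j n) \<in> lp_space p \<and> lp_norm p (\<lambda>n. \<Sum>j\<in>J. F j n) powr p = (\<Sum>j\<in>J. lp_norm p (F j) powr p)"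
proof -
  have eq: "norm (\<Sum>j\<in>J. F j n) powr p = (\<Sum>j\<in>J. norm (F j n) powr p)" for n
    using pow_sum_disj[OF p assms(2), of F n] d by blast
  have s: "summable (\<lambda>n. norm (F j n) powr p)" if "j \<in> J" for j using F[OF that] unfolding lp_space_def by auto
  have ss: "summable (\<lambda>n. \<Sum>j\<in>J. norm (F j n) powr p)" by (intro summable_sum s)
  have mem: "(\<lambda>n. \<Sum>j\<in>J. F j n) \<in> lp_space p" unfolding lp_space_def using ss eq by simp
  have "lp_norm p (\<lambda>n. \<Sum>j\<in>J. F j n) powr p = (\<Sum>n. norm (\<Sum>j\<in>J. F j n) powr p)"
    by (rule lp_norm_powr[OF p mem])
  also have "\<dots> = (\<Sum>n. \<Sum>j\<in>J. norm (F j n) powr p)" unfolding eq ..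
  also have "\<dots> = (\<Sum>j\<in>J. \<Sum>n. norm (F j n) powr p)" by (rule suminf_sum) (use s in auto)
  also have "\<dots> = (\<Sum>j\<in>J. lp_norm p (F j) powr p)"
    using lp_norm_powr[OF p F] by simp
  finally show ?thesis using mem by simp
qed

lemma lp_metric: "p \<ge> 1 \<Longrightarrow> Metric_space (lp_space p) (lp_dist p)"
proof (unfold_locales)
  fix x y assume p: "p \<ge> 1"
  show "0 \<le> lp_dist p x y" unfolding lp_dist_def by (rule lp_norm_nonneg)
  show "lp_dist p x y = lp_dist p y x" unfolding lp_dist_def lp_norm_def by (simp add: norm_minus_commute)
  assume xy: "x \<in> lp_space p" "y \<in> lp_space p"
  have d: "(\<lambda>n. x n - y n) \<in> lp_space p" using lp_diff[OF p xy] by auto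
  show "lp_dist p x y = 0 \<longleftrightarrow> x = y"
  proof
    assume "lp_dist p x y = 0"
    then have "(\<lambda>n. x n - y n) = (\<lambda>n. 0)" using lp_zero_norm[OF _ d] p unfolding lp_dist_def by simp
    then show "x = y" by (metis eq_iff_diff_eq_0 ext)
  next
    assume "x = y" then show "lp_dist p x y = 0" using lp_zero[of p] p unfolding lp_dist_def by simp
  qed
next
  fix x y z assume p: "p \<ge> 1" and xyz: "x \<in> lp_space p" "y \<in> lp_space p" "z \<in> lp_space p"
  have a: "(\<lambda>n. x n - y n) \<in> lp_space p" "(\<lambda>n. y n - z n) \<in> lp_space p"
    using lp_diff[OF p] xyz by auto
  have "lp_norm p (\<lambda>n. (x n - y n) + (y n - z n)) \<le> lp_norm p (\<lambda>n. x n - y n) + lp_norm p (\<lambda>n. y n - z n)"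
    using minkowski[OF p a] by auto
  then show "lp_dist p x z \<le> lp_dist p x y + lp_dist p y z" unfolding lp_dist_def by simp
qed

definition vecY :: "(nat \<times> nat) set \<Rightarrow> (nat \<times> nat \<Rightarrow> complex) \<Rightarrow> (nat \<times> nat \<Rightarrow> complex)" where
  "vecY P a = (\<lambda>k. if k \<in> P then a k else 0)"

definition eY :: "nat \<times> nat \<Rightarrow> (nat \<times> nat \<Rightarrow> complex)" where
  "eY q = vecY {q} (\<lambda>_. 1)"

lemma Y_fin:
  assumes "finite P" "P \<subseteq> Y_index"
  shows "vecY P a \<in> Y_space p"
    "Y_norm p (vecY P a) = (\<Sum>r\<in>fst ` P. Y_blocknorm (vecY P a) r powr p) powr (1/p)"
proof -
  have z: "Y_blocknorm (vecY P a) r powr p = 0" if "r \<notin> fst ` P" for r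
  proof -
    have "vecY P a (r, i) = 0" for i using that unfolding vecY_def by (auto simp: image_iff)
    then show ?thesis unfolding Y_blocknorm_def by simp
  qed
  have s: "(\<lambda>r. Y_blocknorm (vecY P a) r powr p) sums (\<Sum>r\<in>fst ` P. Y_blocknorm (vecY P a) r powr p)"
    using assms by (intro sums_finite z) auto
  show "vecY P a \<in> Y_space p" unfolding Y_space_def using s assms(2) unfolding vecY_def
    by (auto simp: sums_summable)
  show "Y_norm p (vecY P a) = (\<Sum>r\<in>fst ` P. Y_blocknorm (vecY P a) r powr p) powr (1/p)"
    unfolding Y_norm_def using s sums_unique by metis
qed

lemma block_single:
  assumes "inj_on fst P" "q \<in> P" "P \<subseteq> Y_index"
  shows "Y_blocknorm (vecY P a) (fst q) = norm (a q)"
proof -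
  obtain r i where q: "q = (r, i)" by (cases q)
  have iq: "1 \<le> i" "i \<le> r" using assms(2,3) q unfolding Y_index_def by auto
  have "(r, j) \<in> P \<longleftrightarrow> j = i" for j
    using assms(1,2) q unfolding inj_on_def by force
  then have "(\<Sum>j = 1..r. (norm (vecY P a (r, j)))\<^sup>2) = (\<Sum>j = 1..r. if j = i then (norm (a (r,i)))\<^sup>2 else 0)"
    unfolding vecY_def by (intro sum.cong) auto
  also have "\<dots> = (norm (a (r,i)))\<^sup>2" using iq by (simp add: sum.delta')
  finally show ?thesis unfolding Y_blocknorm_def q by simp
qed

lemma block_row:
  assumes "I \<subseteq> {1..r}"
  shows "Y_blocknorm (vecY ({r} \<times> I) (\<lambda>_. g)) r = sqrt (real (card I)) * norm g"
proof -
  have "(\<Sum>j = 1..r. (norm (vecY ({r} \<times> I) (\<lambda>_. g) (r, j)))\<^sup>2) = (\<Sum>j \<in> {1..r}. if j \<in> I then (norm g)\<^sup>2 else 0)"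
    unfolding vecY_def by (intro sum.cong) auto
  also have "\<dots> = (\<Sum>j \<in> {1..r} \<inter> I. (norm g)\<^sup>2)" by (rule sum.inter_restrict[symmetric]) simp
  also have "\<dots> = real (card I) * (norm g)\<^sup>2"
  proof -
    have "{1..r} \<inter> I = I" using assms by auto
    then show ?thesis by simp
  qed
  finally show ?thesis unfolding Y_blocknorm_def by (simp add: real_sqrt_mult)
qed

lemma eY_Y: "q \<in> Y_index \<Longrightarrow> eY q \<in> Y_space p \<and> Y_norm p (eY q) = 1"
proof -
  assume q: "q \<in> Y_index"
  have "Y_blocknorm (vecY {q} (\<lambda>_. 1)) (fst q) = 1"
    using block_single[of "{q}" q "\<lambda>_. 1"] q by simp
  then show ?thesis using Y_fin[where P="{q}" and a="\<lambda>_. 1" and p=p] q unfolding eY_def by simp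
qed

lemma L_scal:
  assumes BL: "bounded_linear_Y_lp p L" and "x \<in> Y_space p"
  shows "L (\<lambda>k. c * x k) = (\<lambda>n. c * L x n)"
  using assms unfolding bounded_linear_Y_lp_def by blast

lemma L_add:
  assumes BL: "bounded_linear_Y_lp p L" and "x \<in> Y_space p" "y \<in> Y_space p"
  shows "L (\<lambda>k. x k + y k) = (\<lambda>n. L x n + L y n)"
  using assms unfolding bounded_linear_Y_lp_def by blast

lemma L_zero:
  assumes "bounded_linear_Y_lp p L"
  shows "L (\<lambda>k. 0) = (\<lambda>n. 0)"
proof -
  have z: "(\<lambda>k. 0) \<in> Y_space p" using Y_fin(1)[where P="{}" and a="\<lambda>_. 0" and p=p] unfolding vecY_def by simp
  have "L (\<lambda>k. 0 * (0::complex)) = (\<lambda>n. 0 * L (\<lambda>k. 0) n)"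
    using L_scal[OF assms z, of 0] by simp
  then show ?thesis by simp
qed

lemma L_vec:
  assumes BL: "bounded_linear_Y_lp p L" and "finite P" "P \<subseteq> Y_index"
  shows "L (vecY P a) = (\<lambda>n. \<Sum>q\<in>P. a q * L (eY q) n)"
  using assms(2,3)
proof (induction P rule: finite_induct)
  case empty
  then show ?case using L_zero[OF BL] unfolding vecY_def by simp
next
  case (insert q P)
  have e: "vecY (insert q P) a = (\<lambda>k. vecY P a k + (\<lambda>k. a q * eY q k) k)"
    using insert(2) unfolding vecY_def eY_def by auto
  have m1: "vecY P a \<in> Y_space p" using Y_fin(1) insert by auto
  have m2: "eY q \<in> Y_space p" using eY_Y insert by auto
  have m3: "(\<lambda>k. a q * eY q k) \<in> Y_space p"
  proof -
    have "(\<lambda>k. a q * eY q k) = vecY {q} (\<lambda>_. a q)" unfolding eY_def vecY_def by auto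
    then show ?thesis using Y_fin(1)[of "{q}"] insert by auto
  qed
  have "L (vecY (insert q P) a) = (\<lambda>n. L (vecY P a) n + L (\<lambda>k. a q * eY q k) n)"
    unfolding e by (rule L_add[OF BL m1 m3])
  also have "\<dots> = (\<lambda>n. L (vecY P a) n + a q * L (eY q) n)"
    using L_scal[OF BL m2] by auto
  finally show ?case using insert by (simp add: add.commute)
qed

definition lamY :: "nat \<times> nat \<Rightarrow> complex" where
  "lamY q = complex_of_real (real (snd q) / real (fst q))"

lemma T_eY: "T_op (eY q) = (\<lambda>k. lamY q * eY q k)"
  unfolding T_op_def eY_def vecY_def lamY_def by (auto simp: fun_eq_iff)

lemma big_powr:
  fixes a K :: real assumes "a > 0"
  shows "\<exists>N::nat. N \<ge> 1 \<and> real N powr a > K"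
proof -
  define y where "y = (\<bar>K\<bar> + 1) powr (1/a)"
  define N where "N = nat \<lceil>y\<rceil> + 1"
  have y0: "y \<ge> 0" unfolding y_def by simp
  have "real N > y" unfolding N_def by linarith
  then have "real N powr a > y powr a" using assms y0 by (intro powr_less_mono2) auto
  moreover have "y powr a = \<bar>K\<bar> + 1" unfolding y_def using assms
    by (simp add: powr_powr)
  ultimately show ?thesis unfolding N_def by (intro exI[of _ N]) (auto simp: N_def)
qed

lemma coord_fin:
  assumes BL: "bounded_linear_Y_lp p L" and p: "p > 1"
    and C: "\<forall>x\<in>Y_space p. lp_norm p (L x) \<le> C * Y_norm p x"
    and P: "finite P" "P \<subseteq> Y_index" "inj_on fst P"
    and d: "\<And>q. q \<in> P \<Longrightarrow> norm (L (eY q) n) \<ge> \<delta>"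
  shows "real (card P) * \<delta> \<le> C * real (card P) powr (1/p)"
proof -
  define v where "v q = L (eY q) n" for q
  define a where "a q = (if v q = 0 then 1 else cnj (v q) / complex_of_real (norm (v q)))" for q
  have av: "a q * v q = complex_of_real (norm (v q))" for q
  proof (cases "v q = 0")
    case False
    have "cnj (v q) * v q = complex_of_real ((norm (v q))\<^sup>2)"
      using complex_norm_square[of "v q"] by (simp add: mult.commute)
    then show ?thesis using False unfolding a_def
      by (simp add: power2_eq_square field_simps)
  qed (simp add: a_def)
  have na: "norm (a q) = 1" for q
    unfolding a_def by (auto simp: norm_divide)
  define x where "x = vecY P a"
  have xY: "x \<in> Y_space p" unfolding x_def using Y_fin(1) P by auto
  have Lx: "L x n = (\<Sum>q\<in>P. complex_of_real (norm (v q)))"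
    unfolding x_def L_vec[OF BL P(1,2)] using av v_def by simp
  have "real (card P) * \<delta> \<le> (\<Sum>q\<in>P. norm (v q))"
    using d v_def by (simp add: sum_bounded_below)
  also have "\<dots> = norm (L x n)" unfolding Lx of_real_sum[symmetric] norm_of_real by (simp add: sum_nonneg)
  also have "\<dots> \<le> lp_norm p (L x)"
    using lp_coord[of p "L x" n] p BL xY unfolding bounded_linear_Y_lp_def by auto
  also have "\<dots> \<le> C * Y_norm p x" using C xY by auto
  also have "Y_norm p x = real (card P) powr (1/p)"
  proof -
    have b: "Y_blocknorm x r powr p = 1" if "r \<in> fst ` P" for r
      using that block_single[OF P(3) _ P(2), of _ a] na unfolding x_def by auto
    have "(\<Sum>r\<in>fst ` P. Y_blocknorm x r powr p) = real (card (fst ` P))"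
      using b by simp
    also have "\<dots> = real (card P)" using card_image[OF P(3)] by simp
    finally show ?thesis using Y_fin(2)[OF P(1,2), of p a] unfolding x_def by simp
  qed
  finally show ?thesis .
qed

lemma coord_tendsto:
  assumes BL: "bounded_linear_Y_lp p L" and p: "p > 1"
    and C: "\<forall>x\<in>Y_space p. lp_norm p (L x) \<le> C * Y_norm p x"
    and qs: "\<And>k. qs k \<in> Y_index" "inj (fst \<circ> qs)"
  shows "(\<lambda>k. L (eY (qs k)) n) \<longlonglongrightarrow> 0"
proof (rule ccontr)
  assume "\<not> ?thesis"
  then obtain \<delta> where d0: "\<delta> > 0" and fr: "\<forall>N. \<exists>k\<ge>N. norm (L (eY (qs k)) n) \<ge> \<delta>"
    unfolding LIMSEQ_iff by (auto simp: not_less)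
  define Q where "Q = {k. norm (L (eY (qs k)) n) \<ge> \<delta>}"
  have infQ: "infinite Q" unfolding Q_def infinite_nat_iff_unbounded_le using fr by auto
  have injqs: "inj qs" using qs(2) unfolding inj_def by auto
  obtain N :: nat where N1: "N \<ge> 1" and Nbig: "real N powr (1 - 1/p) > C / \<delta>"
    using big_powr[of "1 - 1/p" "C/\<delta>"] p by auto
  obtain F where F: "F \<subseteq> Q" "finite F" "card F = N"
    using infinite_arbitrarily_large[OF infQ] by blast
  define P where "P = qs ` F"
  have cP: "card P = N" unfolding P_def using card_image[of qs F] injqs F(3) by (simp add: inj_on_subset)
  have P: "finite P" "P \<subseteq> Y_index" "inj_on fst P"
    unfolding P_def using F(2) qs(1) qs(2)
    by (auto simp: inj_on_def inj_def)
  have "real (card P) * \<delta> \<le> C * real (card P) powr (1/p)"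
    by (rule coord_fin[OF BL p C P]) (use F(1) Q_def P_def in auto)
  then have le: "real N * \<delta> \<le> C * real N powr (1/p)" using cP by simp
  have "real N = real N powr (1/p) * real N powr (1 - 1/p)"
    using N1 by (simp add: powr_add[symmetric])
  then have "real N * \<delta> = real N powr (1/p) * (real N powr (1 - 1/p) * \<delta>)" by simp
  also have "\<dots> > real N powr (1/p) * C"
  proof -
    have "real N powr (1 - 1/p) * \<delta> > C" using Nbig d0 by (simp add: field_simps)
    moreover have "real N powr (1/p) > 0" using N1 by simp
    ultimately show ?thesis by simp
  qed
  finally show False using le by (simp add: mult.commute)
qed

lemma K_eY:
  assumes BL: "bounded_linear_Y_lp p L" and q: "q \<in> Y_index"
  shows "(\<lambda>n. diag_op w (L (eY q)) n - L (T_op (eY q)) n)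
       = (\<lambda>n. (w n - lamY q) * L (eY q) n)"
proof -
  have "L (T_op (eY q)) = (\<lambda>n. lamY q * L (eY q) n)"
    unfolding T_eY using L_scal[OF BL] eY_Y[OF q] by blast
  then show ?thesis unfolding diag_op_def by (auto simp: algebra_simps)
qed

lemma lam_bound:
  assumes "q \<in> Y_index" shows "norm (lamY q) \<le> 1"
proof -
  obtain r i where q: "q = (r,i)" "1 \<le> i" "i \<le> r" using assms unfolding Y_index_def by auto
  have "real i / real r \<le> 1" "real i / real r \<ge> 0" using q by auto
  then show ?thesis unfolding lamY_def q(1) norm_of_real by simp
qed

lemma K_lp:
  assumes BL: "bounded_linear_Y_lp p L" and p: "p > 1" and M: "\<forall>n. norm (w n) \<le> M"
    and q: "q \<in> Y_index"
  shows "(\<lambda>n. (w n - lamY q) * L (eY q) n) \<in> lp_space p"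
proof -
  have v: "L (eY q) \<in> lp_space p" using BL eY_Y[OF q] unfolding bounded_linear_Y_lp_def by blast
  have bnd: "norm ((w n - lamY q) * L (eY q) n)
      \<le> norm (complex_of_real (M + 1) * L (eY q) n)" for n
  proof -
    have "norm (w n - lamY q) \<le> M + 1"
      using norm_triangle_ineq4[of "w n"] lam_bound[OF q] M by (smt (verit))
    moreover have "M + 1 \<ge> 0" using M norm_ge_zero[of "w 0"] by (smt (verit))
    ultimately show ?thesis by (simp add: norm_mult mult_right_mono)
  qed
  have sc: "(\<lambda>n. complex_of_real (M + 1) * L (eY q) n) \<in> lp_space p"
    using lp_scale(1)[OF _ v] p by simp
  show ?thesis using lp_mono(1)[OF _ sc bnd] p by simp
qed

lemma K_small:
  assumes BL: "bounded_linear_Y_lp p L" and p: "p > 1"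
    and C: "\<forall>x\<in>Y_space p. lp_norm p (L x) \<le> C * Y_norm p x"
    and M: "\<forall>n. norm (w n) \<le> M"
    and comp: "compact_Y_lp p (\<lambda>x n. diag_op w (L x) n - L (T_op x) n)"
    and e: "\<epsilon> > 0"
  shows "\<exists>R. \<forall>q\<in>Y_index. fst q \<ge> R \<longrightarrow>
           lp_norm p (\<lambda>n. (w n - lamY q) * L (eY q) n) \<le> \<epsilon>"
proof (rule ccontr)
  define Kq where "Kq q = (\<lambda>n. (w n - lamY q) * L (eY q) n)" for q
  assume neg: "\<not> ?thesis"
  have ex: "\<forall>R. \<exists>q. q \<in> Y_index \<and> fst q \<ge> R \<and> lp_norm p (Kq q) > \<epsilon>"
  proof
    fix R
    show "\<exists>q. q \<in> Y_index \<and> fst q \<ge> R \<and> lp_norm p (Kq q) > \<epsilon>"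
    proof (rule ccontr)
      assume a: "\<not> (\<exists>q. q \<in> Y_index \<and> fst q \<ge> R \<and> lp_norm p (Kq q) > \<epsilon>)"
      have "\<forall>q\<in>Y_index. fst q \<ge> R \<longrightarrow> lp_norm p (Kq q) \<le> \<epsilon>"
      proof (intro ballI impI)
        fix q assume "q \<in> Y_index" "fst q \<ge> R"
        then show "lp_norm p (Kq q) \<le> \<epsilon>" using a not_le by metis
      qed
      then show False using neg unfolding Kq_def by metis
    qed
  qed
  define g where "g R = (SOME q. q \<in> Y_index \<and> fst q \<ge> R \<and> lp_norm p (Kq q) > \<epsilon>)" for R
  have g: "g R \<in> Y_index \<and> fst (g R) \<ge> R \<and> lp_norm p (Kq (g R)) > \<epsilon>" for R
    unfolding g_def using someI_ex[OF ex[rule_format, of R]] .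
  define qs where "qs = rec_nat (g 0) (\<lambda>_ q. g (fst q + 1))"
  have qs0: "qs 0 = g 0" and qsS: "qs (Suc k) = g (fst (qs k) + 1)" for k unfolding qs_def by simp_all
  have qsY: "qs k \<in> Y_index" and qsK: "lp_norm p (Kq (qs k)) > \<epsilon>" for k
    by (cases k; simp add: qs0 qsS g)+
  have "strict_mono (fst \<circ> qs)"
    by (rule strict_monoI_Suc) (use g in \<open>auto simp: qsS intro: Suc_le_lessD\<close>)
  then have injq: "inj (fst \<circ> qs)" by (rule strict_mono_imp_inj_on)
  interpret lp: Metric_space "lp_space p" "lp_dist p" by (rule lp_metric) (use p in simp)
  define Kop where "Kop = (\<lambda>x n. diag_op w (L x) n - L (T_op x) n)"
  define S where "S = lp.mtopology closure_of (Kop ` {x \<in> Y_space p. Y_norm p x \<le> 1})"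
  have cS: "compactin lp.mtopology S" using comp unfolding compact_Y_lp_def S_def Kop_def .
  have yS: "Kq (qs k) \<in> S" for k
  proof -
    have KK: "Kop (eY (qs k)) = Kq (qs k)" unfolding Kop_def Kq_def using K_eY[OF BL qsY] .
    have "eY (qs k) \<in> {x \<in> Y_space p. Y_norm p x \<le> 1}" using eY_Y[OF qsY[of k], of p] by simp
    then have "Kq (qs k) \<in> Kop ` {x \<in> Y_space p. Y_norm p x \<le> 1}"
      using KK by (metis image_eqI)
    moreover have "Kq (qs k) \<in> lp_space p" unfolding Kq_def using K_lp[OF BL p M qsY] .
    ultimately have "Kq (qs k) \<in> topspace lp.mtopology \<inter> Kop ` {x \<in> Y_space p. Y_norm p x \<le> 1}"
      by simp
    then show ?thesis unfolding S_def by (rule subsetD[OF closure_of_subset_Int])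
  qed
  obtain l r where l: "l \<in> S" "strict_mono r" "limitin lp.mtopology ((\<lambda>k. Kq (qs k)) \<circ> r) l sequentially"
  proof -
    have rng: "range (\<lambda>k. Kq (qs k)) \<subseteq> S" using yS by blast
    have "\<exists>l r. l \<in> S \<and> strict_mono r \<and> limitin lp.mtopology ((\<lambda>k. Kq (qs k)) \<circ> r) l sequentially"
      using conjunct2[OF lp.compactin_sequentially[THEN iffD1, OF cS], rule_format, OF rng] .
    then show ?thesis using that by blast
  qed
  have lM: "l \<in> lp_space p" and ev: "\<And>\<eta>. \<eta> > 0 \<Longrightarrow> eventually (\<lambda>k. lp_dist p (Kq (qs (r k))) l < \<eta>) sequentially"
  proof -
    note lm = lp.limitin_metric[THEN iffD1, OF l(3)]
    show "l \<in> lp_space p" using lm by blast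
    fix \<eta> :: real assume "\<eta> > 0"
    then have "eventually (\<lambda>k. ((\<lambda>k. Kq (qs k)) \<circ> r) k \<in> lp_space p \<and> lp_dist p (((\<lambda>k. Kq (qs k)) \<circ> r) k) l < \<eta>) sequentially"
      using lm by blast
    then show "eventually (\<lambda>k. lp_dist p (Kq (qs (r k))) l < \<eta>) sequentially"
      by (rule eventually_mono) simp
  qed
  have l0: "l n = 0" for n
  proof -
    have t1: "(\<lambda>k. Kq (qs (r k)) n) \<longlonglongrightarrow> l n"
    proof (rule LIMSEQ_I)
      fix \<eta> :: real assume "\<eta> > 0"
      then obtain N where N: "\<And>k. k \<ge> N \<Longrightarrow> lp_dist p (Kq (qs (r k))) l < \<eta>"
        using ev[of \<eta>] unfolding eventually_sequentially by auto
      show "\<exists>N. \<forall>k\<ge>N. norm (Kq (qs (r k)) n - l n) < \<eta>"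
      proof (intro exI allI impI)
        fix k assume "k \<ge> N"
        have kl: "Kq (qs (r k)) \<in> lp_space p" using K_lp[OF BL p M qsY] unfolding Kq_def .
        have "(\<lambda>n. Kq (qs (r k)) n - l n) \<in> lp_space p"
          using lp_diff[OF _ kl lM] p by simp
        from lp_coord[OF _ this, of n] p have "norm (Kq (qs (r k)) n - l n) \<le> lp_dist p (Kq (qs (r k))) l"
          unfolding lp_dist_def by simp
        then show "norm (Kq (qs (r k)) n - l n) < \<eta>" using N[OF \<open>k \<ge> N\<close>] by simp
      qed
    qed
    have v0: "(\<lambda>k. L (eY (qs k)) n) \<longlonglongrightarrow> 0"
      by (rule coord_tendsto[OF BL p C qsY injq])
    have t0: "(\<lambda>k. Kq (qs k) n) \<longlonglongrightarrow> 0"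
    proof (rule Lim_null_comparison)
      show "(\<lambda>k. norm (L (eY (qs k)) n) * (M + 1)) \<longlonglongrightarrow> 0"
        by (rule tendsto_mult_left_zero[OF tendsto_norm_zero[OF v0]])
      show "\<forall>\<^sub>F k in sequentially. norm (Kq (qs k) n) \<le> norm (L (eY (qs k)) n) * (M + 1)"
      proof (intro always_eventually allI)
        fix k
        have "norm (w n - lamY (qs k)) \<le> M + 1"
          using norm_triangle_ineq4[of "w n"] lam_bound[OF qsY[of k]] M by (smt (verit))
        then show "norm (Kq (qs k) n) \<le> norm (L (eY (qs k)) n) * (M + 1)"
          unfolding Kq_def norm_mult by (metis mult.commute mult_left_mono norm_ge_zero)
      qed
    qed
    have "(\<lambda>k. Kq (qs (r k)) n) \<longlonglongrightarrow> 0"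
      using LIMSEQ_subseq_LIMSEQ[OF t0 l(2)] by (simp add: comp_def)
    then show ?thesis using t1 LIMSEQ_unique by blast
  qed
  then have "l = (\<lambda>n. 0)" by auto
  then obtain N where "\<And>k. k \<ge> N \<Longrightarrow> lp_dist p (Kq (qs (r k))) l < \<epsilon>"
    using ev[OF e] unfolding eventually_sequentially by auto
  then have "lp_norm p (Kq (qs (r N))) < \<epsilon>" using \<open>l = (\<lambda>n. 0)\<close> unfolding lp_dist_def by auto
  then show False using qsK[of "r N"] by simp
qed

lemma final_arith:
  fixes p c C1 a v b :: real and m :: nat
  assumes p: "p > 1" "p \<noteq> 2" and c: "c > 0" and C1: "C1 \<ge> 0" and m: "m \<ge> 1"
    and b: "0 \<le> b" "b \<le> c/2"
    and a: "(c/2) * real m powr (1/p) \<le> a" "a \<le> C1 * real m powr (1/p)"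
    and v: "c * sqrt (real m) \<le> v" "v \<le> C1 * sqrt (real m)"
    and t: "v \<le> a + b" "a \<le> v + b"
    and big: "real m powr \<bar>1/p - 1/2\<bar> > 2 * (C1 + c) / c"
  shows False
proof -
  have sq: "sqrt (real m) = real m powr (1/2)" using m by (simp add: powr_half_sqrt)
  have m1: "real m \<ge> 1" using m by simp
  have s1: "sqrt (real m) \<ge> 1" using m1 by simp
  have q1: "real m powr (1/p) \<ge> 1" using m1 p by (intro ge_one_powr_ge_zero) auto
  show False
  proof (cases "p < 2")
    case True
    define d where "d = 1/p - 1/2"
    have d0: "d > 0" using True p unfolding d_def by (simp add: field_simps)
    have "real m powr (1/p) = sqrt (real m) * real m powr d"
      unfolding sq d_def using m1 by (simp add: powr_add[symmetric])
    moreover have "real m powr d > 2 * (C1 + c) / c" using big d0 unfolding d_def by simp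
    ultimately have "real m powr (1/p) > sqrt (real m) * (2 * (C1 + c) / c)"
      using s1 by (metis mult_strict_left_mono less_le_trans zero_less_one)
    then have "(c/2) * real m powr (1/p) > (c/2) * (sqrt (real m) * (2 * (C1 + c) / c))"
      using c by (intro mult_strict_left_mono) auto
    also have "(c/2) * (sqrt (real m) * (2 * (C1 + c) / c)) = (C1 + c) * sqrt (real m)"
      using c by (simp add: field_simps)
    finally have "(c/2) * real m powr (1/p) > (C1 + c) * sqrt (real m)" .
    moreover have "(C1 + c) * sqrt (real m) \<ge> C1 * sqrt (real m) + c/2"
    proof -
      have "c * sqrt (real m) \<ge> c * 1" using s1 c by (intro mult_left_mono) auto
      then show ?thesis using c by (simp add: algebra_simps) (use s1 in linarith)
    qed
    ultimately show False using a v b t by linarith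
  next
    case False
    then have p2: "p > 2" using p by simp
    define d where "d = 1/2 - 1/p"
    have d0: "d > 0" using p2 unfolding d_def by (simp add: field_simps)
    have "sqrt (real m) = real m powr (1/p) * real m powr d"
      unfolding sq d_def using m1 by (simp add: powr_add[symmetric])
    moreover have "real m powr d > 2 * (C1 + c) / c" using big d0 unfolding d_def
      by (simp add: abs_minus_commute)
    ultimately have "sqrt (real m) > real m powr (1/p) * (2 * (C1 + c) / c)"
      using q1 by (metis mult_strict_left_mono less_le_trans zero_less_one)
    then have "c * sqrt (real m) > c * (real m powr (1/p) * (2 * (C1 + c) / c))"
      using c by (intro mult_strict_left_mono) auto
    also have "c * (real m powr (1/p) * (2 * (C1 + c) / c)) = 2 * (C1 + c) * real m powr (1/p)"
      using c by (simp add: field_simps)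
    finally have "c * sqrt (real m) > 2 * (C1 + c) * real m powr (1/p)" .
    moreover have "2 * (C1 + c) * real m powr (1/p) \<ge> C1 * real m powr (1/p) + c/2"
    proof -
      have "C1 * real m powr (1/p) \<ge> 0" using C1 q1 by simp
      moreover have "c * real m powr (1/p) \<ge> c * 1" using q1 c by (intro mult_left_mono) auto
      moreover have "2 * (C1 + c) * real m powr (1/p) = 2 * (C1 * real m powr (1/p)) + 2 * (c * real m powr (1/p))"
        by (simp add: algebra_simps)
      ultimately show ?thesis using c by linarith
    qed
    ultimately show False using a v b t by linarith
  qed
qed

lemma main_contra:
  assumes BL: "bounded_linear_Y_lp p L" and p: "p > 1" "p \<noteq> 2"
    and C: "\<forall>x\<in>Y_space p. lp_norm p (L x) \<le> C1 * Y_norm p x" and C1: "C1 \<ge> 0"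
    and c: "c > 0" and lower: "\<And>x. x \<in> Y_space p \<Longrightarrow> Y_norm p x = 1 \<Longrightarrow> c \<le> lp_norm p (L x)"
    and M: "\<forall>n. norm (w n) \<le> M"
    and comp: "compact_Y_lp p (\<lambda>x n. diag_op w (L x) n - L (T_op x) n)"
  shows False
proof -
  have p0: "p > 0" "p \<ge> 1" using p by auto
  have dpos: "\<bar>1/p - 1/2\<bar> > 0" using p by (auto simp: field_simps)
  obtain m :: nat where m1: "m \<ge> 1" and big: "real m powr \<bar>1/p - 1/2\<bar> > 2 * (C1 + c) / c"
    using big_powr[OF dpos] by blast
  have mpos: "real m > 0" using m1 by simp
  define \<epsilon> where "\<epsilon> = c / (4 * (real m)^2)"
  have e0: "\<epsilon> > 0" unfolding \<epsilon>_def using c mpos by simp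
  obtain R where R: "\<forall>q\<in>Y_index. fst q \<ge> R \<longrightarrow>
           lp_norm p (\<lambda>n. (w n - lamY q) * L (eY q) n) \<le> \<epsilon>"
    using K_small[OF BL p(1) C M comp e0] by blast
  define t where "t = R + 1"
  define r where "r = m * t"
  have t0: "t > 0" unfolding t_def by simp
  have rR: "r \<ge> R" unfolding r_def t_def using m1 by (metis le_add1 le_trans mult_le_mono1 nat_mult_1)
  define J where "J = {1..m}"
  define qj where "qj j = (r, j * t)" for j
  have qjY: "qj j \<in> Y_index" if "j \<in> J" for j
    using that t0 unfolding qj_def J_def r_def Y_index_def by auto
  have lam: "lamY (qj j) = complex_of_real (real j / real m)" for j
    unfolding lamY_def qj_def r_def using t0 by simp
  define v where "v j = L (eY (qj j))" for j
  have vlp: "v j \<in> lp_space p" if "j \<in> J" for j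
    using BL eY_Y[OF qjY[OF that], of p] unfolding v_def bounded_linear_Y_lp_def by blast
  have vlo: "c \<le> lp_norm p (v j)" and vhi: "lp_norm p (v j) \<le> C1" if "j \<in> J" for j
    using lower[of "eY (qj j)"] C eY_Y[OF qjY[OF that], of p] unfolding v_def by auto
  have kj: "lp_norm p (\<lambda>n. (w n - lamY (qj j)) * v j n) \<le> \<epsilon>" if "j \<in> J" for j
    using R qjY[OF that] rR unfolding v_def qj_def by auto
  define S where "S j = {n. norm (w n - lamY (qj j)) < 1 / (2 * real m)}" for j
  define a where "a j n = (if n \<in> S j then v j n else 0)" for j n
  define b where "b j n = (if n \<in> S j then 0 else v j n)" for j n
  have klp: "(\<lambda>n. (w n - lamY (qj j)) * v j n) \<in> lp_space p" if "j \<in> J" for j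
    using K_lp[OF BL p(1) M qjY[OF that]] unfolding v_def .
  have bj: "b j \<in> lp_space p \<and> lp_norm p (b j) \<le> c / (2 * real m)" if "j \<in> J" for j
  proof -
    have pt: "norm (b j n) \<le> norm (complex_of_real (2 * real m) * ((w n - lamY (qj j)) * v j n))" for n
    proof (cases "n \<in> S j")
      case True then show ?thesis unfolding b_def by simp
    next
      case False
      then have "norm (w n - lamY (qj j)) \<ge> 1 / (2 * real m)" unfolding S_def by simp
      then have "2 * real m * norm (w n - lamY (qj j)) \<ge> 1" using mpos by (simp add: field_simps)
      then have "norm (v j n) \<le> (2 * real m * norm (w n - lamY (qj j))) * norm (v j n)"
        using mult_right_mono[OF _ norm_ge_zero[of "v j n"]] by fastforce
      then show ?thesis using False mpos unfolding b_def by (simp add: norm_mult mult.assoc)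
    qed
    have sc: "(\<lambda>n. complex_of_real (2 * real m) * ((w n - lamY (qj j)) * v j n)) \<in> lp_space p"
      "lp_norm p (\<lambda>n. complex_of_real (2 * real m) * ((w n - lamY (qj j)) * v j n)) = 2 * real m * lp_norm p (\<lambda>n. (w n - lamY (qj j)) * v j n)"
      using lp_scale[OF p0(1) klp[OF that]] mpos by auto
    have "lp_norm p (b j) \<le> 2 * real m * lp_norm p (\<lambda>n. (w n - lamY (qj j)) * v j n)"
      using lp_mono(2)[OF p0(1) sc(1) pt] sc(2) by simp
    also have "\<dots> \<le> 2 * real m * \<epsilon>" using kj[OF that] mpos by simp
    also have "\<dots> = c / (2 * real m)" unfolding \<epsilon>_def using mpos by (simp add: power2_eq_square field_simps)
    finally show ?thesis using lp_mono(1)[OF p0(1) sc(1) pt] by simp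
  qed
  have aj: "a j \<in> lp_space p \<and> c / 2 \<le> lp_norm p (a j) \<and> lp_norm p (a j) \<le> C1" if "j \<in> J" for j
  proof -
    have pt: "norm (a j n) \<le> norm (v j n)" for n unfolding a_def by simp
    have alp: "a j \<in> lp_space p" using lp_mono(1)[OF p0(1) vlp[OF that] pt] .
    have ahi: "lp_norm p (a j) \<le> C1" using lp_mono(2)[OF p0(1) vlp[OF that] pt] vhi[OF that] by simp
    have "v j = (\<lambda>n. a j n + b j n)" unfolding a_def b_def by auto
    then have "lp_norm p (v j) \<le> lp_norm p (a j) + lp_norm p (b j)"
      using minkowski[OF p0(2) alp conjunct1[OF bj[OF that]]] by simp
    then have "c - c / (2 * real m) \<le> lp_norm p (a j)" using vlo[OF that] bj[OF that] by simp
    moreover have "c / (2 * real m) \<le> c / 2" by (rule frac_le) (use c m1 in auto)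
    ultimately show ?thesis using alp ahi by simp
  qed
  have disj: "a j n = 0 \<or> a j' n = 0" if "j \<in> J" "j' \<in> J" "j \<noteq> j'" for j j' n
  proof (rule ccontr)
    assume "\<not> ?thesis"
    then have "n \<in> S j" "n \<in> S j'" unfolding a_def by (auto split: if_splits)
    then have h: "norm (w n - lamY (qj j)) < 1 / (2 * real m)" "norm (w n - lamY (qj j')) < 1 / (2 * real m)"
      unfolding S_def by auto
    have "norm (lamY (qj j) - lamY (qj j')) \<le> norm (w n - lamY (qj j)) + norm (w n - lamY (qj j'))"
    proof -
      have "lamY (qj j) - lamY (qj j') = (w n - lamY (qj j')) - (w n - lamY (qj j))" by simp
      then show ?thesis using norm_triangle_ineq4[of "w n - lamY (qj j')" "w n - lamY (qj j)"] by simp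
    qed
    also have "\<dots> < 1 / real m" using h by simp
    finally have lt: "norm (lamY (qj j) - lamY (qj j')) < 1 / real m" .
    have "lamY (qj j) - lamY (qj j') = complex_of_real (real j / real m - real j' / real m)"
      unfolding lam by (simp only: of_real_diff)
    then have "norm (lamY (qj j) - lamY (qj j')) = \<bar>real j / real m - real j' / real m\<bar>"
      by (simp only: norm_of_real)
    also have "\<dots> = \<bar>real j - real j'\<bar> / real m" using mpos by (simp add: diff_divide_distrib[symmetric])
    finally have "norm (lamY (qj j) - lamY (qj j')) = \<bar>real j - real j'\<bar> / real m" .
    moreover have "\<bar>real j - real j'\<bar> \<ge> 1" using that(3) by linarith
    ultimately have "norm (lamY (qj j) - lamY (qj j')) \<ge> 1 / real m" using mpos by (simp add: frac_le)
    then show False using lt by simp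
  qed
  have fJ: "finite J" "card J = m" unfolding J_def by auto
  define A where "A n = (\<Sum>j\<in>J. a j n)" for n
  define B where "B n = (\<Sum>j\<in>J. b j n)" for n
  define V where "V n = (\<Sum>j\<in>J. v j n)" for n
  have Ad: "A \<in> lp_space p \<and> lp_norm p A powr p = (\<Sum>j\<in>J. lp_norm p (a j) powr p)"
    using lp_disj[OF p0(1) fJ(1), of a] aj disj unfolding A_def[abs_def] by blast
  have Alp: "A \<in> lp_space p" using Ad by blast
  have Bs: "B \<in> lp_space p \<and> lp_norm p B \<le> (\<Sum>j\<in>J. lp_norm p (b j))"
    using lp_sum[OF p0(2) fJ(1), of b] bj unfolding B_def[abs_def] by blast
  have Blp: "B \<in> lp_space p" using Bs by blast
  have Bhi: "lp_norm p B \<le> c / 2"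
  proof -
    have "(\<Sum>j\<in>J. lp_norm p (b j)) \<le> (\<Sum>j\<in>J. c / (2 * real m))" using bj by (intro sum_mono) auto
    also have "\<dots> = c / 2" using fJ mpos by simp
    finally show ?thesis using Bs by simp
  qed
  have VAB: "V = (\<lambda>n. A n + B n)"
  proof
    fix n
    have "V n = (\<Sum>j\<in>J. a j n + b j n)" unfolding V_def a_def b_def by (intro sum.cong) auto
    then show "V n = A n + B n" unfolding A_def B_def by (simp add: sum.distrib)
  qed
  have VM: "(\<lambda>n. A n + B n) \<in> lp_space p \<and> lp_norm p (\<lambda>n. A n + B n) \<le> lp_norm p A + lp_norm p B"
    by (rule minkowski[OF p0(2) Alp Blp])
  have Vlp: "V \<in> lp_space p" using VM VAB by simp
  have VA: "lp_norm p V \<le> lp_norm p A + lp_norm p B" using VM VAB by simp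
  have AV: "lp_norm p A \<le> lp_norm p V + lp_norm p B"
  proof -
    have "(\<lambda>n. V n - B n) = A" unfolding VAB by simp
    then show ?thesis using lp_diff[OF p0(2) Vlp Blp] by simp
  qed
  define sA where "sA = (\<Sum>j\<in>J. lp_norm p (a j) powr p)"
  have sA0: "sA \<ge> 0" unfolding sA_def by (simp add: sum_nonneg)
  have Aeq: "lp_norm p A = sA powr (1/p)" using lp_norm_eq[OF p0(1) sA0] Ad unfolding sA_def by blast
  have sAlo: "real m * (c/2) powr p \<le> sA"
  proof -
    have "(\<Sum>j\<in>J. (c/2) powr p) \<le> sA" unfolding sA_def
      using aj c p0 by (intro sum_mono powr_mono2) auto
    then show ?thesis using fJ by simp
  qed
  have sAhi: "sA \<le> real m * C1 powr p"
  proof -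
    have "sA \<le> (\<Sum>j\<in>J. C1 powr p)" unfolding sA_def
      using aj c p0 by (intro sum_mono powr_mono2) (auto simp: lp_norm_nonneg)
    then show ?thesis using fJ by simp
  qed
  have Alo: "(c/2) * real m powr (1/p) \<le> lp_norm p A"
  proof -
    have "(real m * (c/2) powr p) powr (1/p) \<le> sA powr (1/p)"
      using sAlo p0 c by (intro powr_mono2) auto
    moreover have "(real m * (c/2) powr p) powr (1/p) = (c/2) * real m powr (1/p)"
      using c p0 by (simp add: powr_mult powr_inv_cancel)
    ultimately show ?thesis using Aeq by simp
  qed
  have Ahi: "lp_norm p A \<le> C1 * real m powr (1/p)"
  proof -
    have "sA powr (1/p) \<le> (real m * C1 powr p) powr (1/p)"
      using sAhi sA0 p0 by (intro powr_mono2) auto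
    moreover have "(real m * C1 powr p) powr (1/p) = C1 * real m powr (1/p)"
      using C1 p0 by (simp add: powr_mult powr_inv_cancel)
    ultimately show ?thesis using Aeq by simp
  qed
  define f where "f j = (r, j * t)" for j
  define I where "I = (\<lambda>j. j * t) ` J"
  define P where "P = {r} \<times> I"
  define \<gamma> where "\<gamma> = complex_of_real (1 / sqrt (real m))"
  define x where "x = vecY P (\<lambda>_. \<gamma>)"
  have injt: "inj_on (\<lambda>j. j * t) J" using t0 unfolding inj_on_def by auto
  have cI: "card I = m" unfolding I_def using card_image[OF injt] fJ by simp
  have IR: "I \<subseteq> {1..r}" unfolding I_def J_def r_def using t0 by auto
  have PY: "finite P" "P \<subseteq> Y_index" unfolding P_def I_def using IR fJ
    by (auto simp: Y_index_def I_def)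
  have fstP: "fst ` P = {r}" unfolding P_def using cI m1 by (auto simp: card_gt_0_iff[symmetric])
  have xY: "x \<in> Y_space p" unfolding x_def using Y_fin(1)[OF PY] .
  have xn: "Y_norm p x = 1"
  proof -
    have "Y_blocknorm x r = sqrt (real (card I)) * norm \<gamma>" unfolding x_def P_def by (rule block_row[OF IR])
    also have "\<dots> = 1" unfolding cI \<gamma>_def using mpos by (simp add: norm_divide)
    finally show ?thesis using Y_fin(2)[OF PY, of p "\<lambda>_. \<gamma>"] fstP unfolding x_def by simp
  qed
  have Pf: "P = f ` J" unfolding P_def I_def f_def by auto
  have injf: "inj_on f J" using injt unfolding inj_on_def f_def by auto
  have Lx: "L x = (\<lambda>n. \<gamma> * V n)"
  proof -
    have "L x = (\<lambda>n. \<Sum>q\<in>P. \<gamma> * L (eY q) n)" unfolding x_def by (rule L_vec[OF BL PY])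
    also have "\<dots> = (\<lambda>n. \<Sum>j\<in>J. \<gamma> * v j n)"
      unfolding Pf sum.reindex[OF injf] by (simp add: v_def f_def qj_def comp_def)
    also have "\<dots> = (\<lambda>n. \<gamma> * V n)" unfolding V_def by (simp add: sum_distrib_left)
    finally show ?thesis .
  qed
  have nLx: "lp_norm p (L x) = lp_norm p V / sqrt (real m)"
    unfolding Lx using lp_scale(2)[OF p0(1) Vlp, of \<gamma>] mpos unfolding \<gamma>_def by (simp add: norm_divide)
  have sm: "sqrt (real m) > 0" using mpos by simp
  have Vlo: "c * sqrt (real m) \<le> lp_norm p V"
    using lower[OF xY xn] nLx sm by (simp add: field_simps)
  have Vhi: "lp_norm p V \<le> C1 * sqrt (real m)"
  proof -
    have "lp_norm p (L x) \<le> C1" using C xY xn by auto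
    then have "lp_norm p V / sqrt (real m) \<le> C1" using nLx by simp
    then show ?thesis using sm by (simp add: divide_le_eq mult.commute)
  qed
  show False
    by (rule final_arith[OF p c C1 m1 _ Bhi Alo Ahi Vlo Vhi VA AV big]) (rule lp_norm_nonneg)
qed

theorem lemma5p21:
  fixes p :: real and w :: "nat \<Rightarrow> complex"
  assumes "1 < p" and "p \<noteq> 2"
    and "\<exists>M. \<forall>n. norm (w n) \<le> M"
  shows "\<not> (\<exists>L. bounded_linear_Y_lp p L \<and>
              Inf {lp_norm p (L x) | x. x \<in> Y_space p \<and> Y_norm p x = 1} > 0 \<and>
              compact_Y_lp p (\<lambda>x n. diag_op w (L x) n - L (T_op x) n))"
proof
  assume "\<exists>L. bounded_linear_Y_lp p L \<and>
              Inf {lp_norm p (L x) | x. x \<in> Y_space p \<and> Y_norm p x = 1} > 0 \<and>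
              compact_Y_lp p (\<lambda>x n. diag_op w (L x) n - L (T_op x) n)"
  then obtain L where BL: "bounded_linear_Y_lp p L"
    and inf: "Inf {lp_norm p (L x) | x. x \<in> Y_space p \<and> Y_norm p x = 1} > 0"
    and comp: "compact_Y_lp p (\<lambda>x n. diag_op w (L x) n - L (T_op x) n)" by blast
  obtain C where C: "\<forall>x\<in>Y_space p. lp_norm p (L x) \<le> C * Y_norm p x"
    using BL unfolding bounded_linear_Y_lp_def by blast
  define C1 where "C1 = max C 0"
  have C1: "\<forall>x\<in>Y_space p. lp_norm p (L x) \<le> C1 * Y_norm p x"
  proof
    fix x assume "x \<in> Y_space p"
    then have "lp_norm p (L x) \<le> C * Y_norm p x" using C by blast
    moreover have "Y_norm p x \<ge> 0" unfolding Y_norm_def by simp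
    ultimately show "lp_norm p (L x) \<le> C1 * Y_norm p x" unfolding C1_def
      by (meson max.cobounded1 mult_right_mono order_trans)
  qed
  define c where "c = Inf {lp_norm p (L x) | x. x \<in> Y_space p \<and> Y_norm p x = 1}"
  have lower: "c \<le> lp_norm p (L x)" if "x \<in> Y_space p" "Y_norm p x = 1" for x
    unfolding c_def
  proof (rule cInf_lower)
    show "lp_norm p (L x) \<in> {lp_norm p (L x) | x. x \<in> Y_space p \<and> Y_norm p x = 1}" using that by blast
    show "bdd_below {lp_norm p (L x) | x. x \<in> Y_space p \<and> Y_norm p x = 1}"
      by (rule bdd_belowI[of _ 0]) (auto simp: lp_norm_nonneg)
  qed
  obtain M where M: "\<forall>n. norm (w n) \<le> M" using assms(3) by blast
  show False
    by (rule main_contra[OF BL assms(1,2) C1 _ _ lower M comp])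
       (use inf in \<open>auto simp: C1_def c_def\<close>)
qed

end
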